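(* Assume Condition 1 and let $B>0$ and $\epsilon\in(0,2\lambda-1)$. There is a constant $C<\infty$ (not depending on $n$ or $\delta$) such that for all $n\ge1$ and all $\delta\in(0,1]$, $$\mathbb{E}\sup_{b\in\mathcal E(2B),\ |b|_2\le\delta}\Big|\frac{1}{\sqrt n}\sum_{t=1}^n\varepsilon_tX_t(b)\Big|\le C\,\delta^{\frac{2\lambda-\epsilon-1}{2\lambda-\epsilon}} .$$
   Context: Let $(\varepsilon_t)_{t\in\mathbb{Z}}$ be i.i.d. real random variables with $\mathbb{E}\varepsilon_t=0$, $\mathbb{E}\varepsilon_t^2=\sigma^2\in(0,\infty)$, $\mathbb{E}\varepsilon_t^4<\infty$. Fix $\lambda>1/2$ and positive constants $\lambda_k$, $k\ge1$, with $c_1k^\lambda\le\lambda_k\le c_2k^\lambda$ for some constants $0<c_1\le c_2<\infty$. For a real sequence $b=(b_k)_{k\ge1}$ put $|b|_2^2=\sum_k b_k^2$, $|b|_{\mathcal E}^2=\sum_{k\ge1}\lambda_k^2b_k^2$, $\mathcal E=\{b:|b|_{\mathcal E}<\infty\}$ and $\mathcal E(B)=\{b:|b|_{\mathcal E}\le B\}$. Condition 1: $\varphi=(\varphi_k)_{k\ge1}\in\mathcal E$; $1-\sum_{k\ge1}\varphi_kz^k\neq0$ for all complex $z$ with $|z|\le1$; and $(Y_t)_{t\in\mathbb{Z}}$ is the causal solution (each $Y_t$ measurable w.r.t. $\sigma(\varepsilon_s:s\le t)$, with $\sup_t\mathbb{E}Y_t^2<\infty$) of $Y_t=\sum_{k\ge1}\varphi_kY_{t-k}+\varepsilon_t$,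 $t\in\mathbb{Z}$. For $a\in\mathcal E$, $X_t(a)=\sum_{k\ge1}a_kY_{t-k}$ (almost surely convergent since $\sum_k|a_k|<\infty$ for $a\in\mathcal E$). *)

theory Defs
  imports "HOL-Probability.Probability"
begin

text \<open>Sequences b = (b_k)_{k>=1} are represented as functions nat => real;
  the value at index 0 is ignored everywhere.\<close>

definition inE :: "(nat \<Rightarrow> real) \<Rightarrow> (nat \<Rightarrow> real) \<Rightarrow> bool" where
  "inE lam b \<longleftrightarrow> summable (\<lambda>k. (lam (Suc k) * b (Suc k))^2)"

definition Enorm :: "(nat \<Rightarrow> real) \<Rightarrow> (nat \<Rightarrow> real) \<Rightarrow> real" where
  "Enorm lam b = sqrt (\<Sum>k. (lam (Suc k) * b (Suc k))^2)"

definition l2norm :: "(nat \<Rightarrow> real) \<Rightarrow> real" where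
  "l2norm b = sqrt (\<Sum>k. (b (Suc k))^2)"

definition Xt :: "(int \<Rightarrow> 'a \<Rightarrow> real) \<Rightarrow> (nat \<Rightarrow> real) \<Rightarrow> int \<Rightarrow> 'a \<Rightarrow> real" where
  "Xt Y a t x = (\<Sum>k. a (Suc k) * Y (t - int (Suc k)) x)"

definition past_sigma :: "'a measure \<Rightarrow> (int \<Rightarrow> 'a \<Rightarrow> real) \<Rightarrow> int \<Rightarrow> 'a measure" where
  "past_sigma M e t = sigma (space M) {e s -` A \<inter> space M | s A. s \<le> t \<and> A \<in> sets borel}"

text \<open>Outer expectation (the supremum need not be measurable a priori).\<close>
definition outer_nn_integral :: "'a measure \<Rightarrow> ('a \<Rightarrow> ennreal) \<Rightarrow> ennreal" where
  "outer_nn_integral M f =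
     (INF g \<in> {g \<in> borel_measurable M. \<forall>x\<in>space M. f x \<le> g x}. integral\<^sup>N M g)"

end

theory Submission
  imports Defs
begin


lemma (in prob_space) past_sigma_sets:
  assumes rv: "\<And>s. epsi s \<in> borel_measurable M"
  shows "sets (past_sigma M epsi t) = sigma_sets (space M) {epsi s -` A \<inter> space M | s A. s \<le> t \<and> A \<in> sets borel}"
    and "space (past_sigma M epsi t) = space M"
  unfolding past_sigma_def by (auto intro!: sets_measure_of space_measure_of)

lemma (in prob_space) past_subalg:
  assumes rv: "\<And>s. epsi s \<in> borel_measurable M"
  shows "subalgebra M (past_sigma M epsi t)"
  unfolding subalgebra_def
proof (intro conjI)
  show "sets (past_sigma M epsi t) \<subseteq> sets M"
    unfolding past_sigma_sets[OF rv]
    by (rule sets.sigma_sets_subset) (auto intro: measurable_sets[OF rv])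
qed (simp add: past_sigma_sets[OF rv])

lemma (in prob_space) indep_past:
  assumes indep: "indep_vars (\<lambda>_. borel) epsi UNIV"
    and W: "W \<in> borel_measurable (past_sigma M epsi s)" and st: "s < t"
  shows "indep_var borel (epsi t) borel (W::'a \<Rightarrow> real)"
proof -
  have rv: "\<And>s. epsi s \<in> borel_measurable M" using indep unfolding indep_vars_def2 by auto
  have Wm: "W \<in> borel_measurable M"
    using measurable_from_subalg[OF past_subalg[OF rv] W] .
  let ?E = "\<lambda>i. {epsi i -` A \<inter> space M | A. A \<in> sets borel}"
  let ?I = "\<lambda>b::bool. if b then {t} else {..s}"
  have ind2: "indep_sets (\<lambda>j. sigma_sets (space M) (\<Union>i\<in>?I j. ?E i)) UNIV"
  proof (rule indep_sets_collect_sigma)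
    show "indep_sets ?E (\<Union>j\<in>UNIV. ?I j)"
      using indep unfolding indep_vars_def2 by (auto intro: indep_sets_mono_index)
    show "Int_stable (?E i)" for i
      apply (auto simp: Int_stable_def)
      apply (rule_tac x="A \<inter> Aa" in exI)
      apply auto
      done
    show "disjoint_family_on ?I UNIV" using st
      by (auto simp: disjoint_family_on_def)
  qed
  have s1: "sigma_sets (space M) {epsi t -` A \<inter> space M | A. A \<in> sets borel} \<subseteq> sigma_sets (space M) (\<Union>i\<in>?I True. ?E i)"
    by simp
  have s2: "sigma_sets (space M) {W -` A \<inter> space M | A. A \<in> sets borel} \<subseteq> sigma_sets (space M) (\<Union>i\<in>?I False. ?E i)"
  proof (rule sigma_sets_mono)
    have eq: "(\<Union>i\<in>?I False. ?E i) = {epsi s' -` A \<inter> space M | s' A. s' \<le> s \<and> A \<in> sets borel}"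
      by auto
    show "{W -` A \<inter> space M | A. A \<in> sets borel} \<subseteq> sigma_sets (space M) (\<Union>i\<in>?I False. ?E i)"
      unfolding eq
    proof safe
      fix A :: "real set" assume "A \<in> sets borel"
      then have "W -` A \<inter> space (past_sigma M epsi s) \<in> sets (past_sigma M epsi s)"
        using W by (rule measurable_sets[rotated])
      then show "W -` A \<inter> space M \<in> sigma_sets (space M) {epsi s' -` A \<inter> space M | s' A. s' \<le> s \<and> A \<in> sets borel}"
        by (simp add: past_sigma_sets[OF rv])
    qed
  qed
  show ?thesis
    unfolding indep_var_eq
  proof (intro conjI)
    show "random_variable borel (epsi t)" by (rule rv)
    show "random_variable borel W" by (rule Wm)
    show "indep_set (sigma_sets (space M) {epsi t -` A \<inter> space M |A. A \<in> sets borel})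
         (sigma_sets (space M) {W -` A \<inter> space M |A. A \<in> sets borel})"
      unfolding indep_set_def
      by (rule indep_sets_mono_sets[OF ind2]) (use s1 s2 in \<open>auto split: bool.split\<close>)
  qed
qed





lemma abs_mult_le_sq: "\<bar>u * v\<bar> \<le> (u::real)^2 + v^2"
proof -
  have "0 \<le> (\<bar>u\<bar> - \<bar>v\<bar>)^2" by simp
  then have "2 * (\<bar>u\<bar> * \<bar>v\<bar>) \<le> u^2 + v^2" by (simp add: power2_eq_square algebra_simps)
  then show ?thesis by (simp add: abs_mult) (smt (verit) mult_nonneg_nonneg abs_ge_zero)
qed


lemma abs_mult_le_sq2: "\<bar>u * v\<bar> \<le> \<bar>(u::real)^2 + v^2\<bar>"
  using abs_mult_le_sq[of u v] by linarith

lemma (in prob_space) past_mono: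
  assumes rv: "\<And>s. epsi s \<in> borel_measurable M"
    and W: "W \<in> borel_measurable (past_sigma M epsi s)" and st: "s \<le> t"
  shows "W \<in> borel_measurable (past_sigma M epsi t)"
proof (rule measurable_from_subalg[OF _ W])
  show "subalgebra (past_sigma M epsi t) (past_sigma M epsi s)"
    unfolding subalgebra_def past_sigma_sets[OF rv]
    using st by (intro conjI refl sigma_sets_mono') (blast intro: order_trans)
qed

lemma (in prob_space) moment:
  fixes epsi Y :: "int \<Rightarrow> 'a \<Rightarrow> real"
  assumes indep: "indep_vars (\<lambda>_. borel) epsi UNIV"
    and e2: "\<And>t. integrable M (\<lambda>x. (epsi t x)^2)"
    and e2S: "\<And>t. expectation (\<lambda>x. (epsi t x)^2) \<le> S"
    and e0: "\<And>t. expectation (epsi t) = 0"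
    and Yc: "\<And>t. Y t \<in> borel_measurable (past_sigma M epsi t)"
    and Y2: "\<And>t. integrable M (\<lambda>x. (Y t x)^2)"
    and Y2K: "\<And>t. expectation (\<lambda>x. (Y t x)^2) \<le> K"
    and k: "k \<ge> 1" and T: "finite T"
  shows "integrable M (\<lambda>x. (\<Sum>t\<in>T. epsi t x * Y (t - k) x)^2)
     \<and> expectation (\<lambda>x. (\<Sum>t\<in>T. epsi t x * Y (t - k) x)^2) \<le> real (card T) * S * K"
proof -
  have rv: "\<And>s. epsi s \<in> borel_measurable M" using indep unfolding indep_vars_def2 by auto
  have Ym: "\<And>t. Y t \<in> borel_measurable M"
    using measurable_from_subalg[OF past_subalg[OF rv] Yc] .
  have e1: "\<And>t. integrable M (epsi t)"
    using square_integrable_imp_integrable[OF rv e2] .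
  have Y1: "\<And>t. integrable M (Y t)"
    using square_integrable_imp_integrable[OF Ym Y2] .
  have Spos: "0 \<le> S" using e2S[of 0] integral_nonneg_AE[of "\<lambda>x. (epsi 0 x)^2"] by (smt (verit) AE_I2 zero_le_power2)
  define a where "a t x = epsi t x * Y (t - k) x" for t x
  have am: "a t \<in> borel_measurable M" for t unfolding a_def using rv Ym by measurable
  have diag: "integrable M (\<lambda>x. (a t x)^2) \<and> expectation (\<lambda>x. (a t x)^2) \<le> S * K" for t
  proof -
    have iv: "indep_var borel (epsi t) borel (Y (t-k))"
      by (rule indep_past[OF indep Yc]) (use k in auto)
    have iv2: "indep_var borel ((\<lambda>x. x^2) \<circ> epsi t) borel ((\<lambda>x. x^2) \<circ> Y (t-k))"
      by (rule indep_var_compose[OF iv]) auto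
    have eq: "(\<lambda>x. (a t x)^2) = (\<lambda>x. ((\<lambda>x. x^2) \<circ> epsi t) x * ((\<lambda>x. x^2) \<circ> Y (t-k)) x)"
      by (auto simp: a_def power_mult_distrib)
    have i: "integrable M (\<lambda>x. (a t x)^2)"
      unfolding eq by (rule indep_var_integrable[OF iv2]) (use e2 Y2 in \<open>auto simp: comp_def\<close>)
    have "expectation (\<lambda>x. (a t x)^2) = expectation (\<lambda>x. (epsi t x)^2) * expectation (\<lambda>x. (Y (t-k) x)^2)"
      unfolding eq by (subst indep_var_lebesgue_integral[OF iv2]) (use e2 Y2 in \<open>auto simp: comp_def\<close>)
    also have "\<dots> \<le> S * K"
      by (rule mult_mono[OF e2S Y2K Spos]) (auto intro: integral_nonneg_AE)
    finally show ?thesis using i by simp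
  qed
  have prodint: "integrable M (\<lambda>x. a t x * a s x)" for t s
  proof (rule Bochner_Integration.integrable_bound[where f="\<lambda>x. (a t x)^2 + (a s x)^2"])
    show "integrable M (\<lambda>x. (a t x)^2 + (a s x)^2)" using diag by auto
    show "(\<lambda>x. a t x * a s x) \<in> borel_measurable M" using am by measurable
    show "AE x in M. norm (a t x * a s x) \<le> norm ((a t x)^2 + (a s x)^2)"
      by (intro AE_I2) (simp only: real_norm_def abs_mult_le_sq2)
  qed
  have off: "expectation (\<lambda>x. a t x * a s x) = 0" if st: "s < t" for t s
  proof -
    define W where "W x = Y (t - k) x * a s x" for x
    have Wc: "W \<in> borel_measurable (past_sigma M epsi (t - 1))"
    proof -
      have "Y (t-k) \<in> borel_measurable (past_sigma M epsi (t - 1))"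
        by (rule past_mono[OF rv Yc]) (use k in linarith)
      moreover have "Y (s-k) \<in> borel_measurable (past_sigma M epsi (t - 1))"
        by (rule past_mono[OF rv Yc]) (use k st in linarith)
      moreover have "epsi s \<in> borel_measurable (past_sigma M epsi (t - 1))"
      proof (rule borel_measurableI)
        fix S :: "real set" assume "open S"
        have "epsi s -` S \<inter> space M \<in> {epsi s' -` A \<inter> space M | s' A. s' \<le> t - 1 \<and> A \<in> sets borel}"
          using st \<open>open S\<close> by (intro CollectI exI[of _ s] exI[of _ S] conjI refl) auto
        then show "epsi s -` S \<inter> space (past_sigma M epsi (t - 1)) \<in> sets (past_sigma M epsi (t - 1))"
          unfolding past_sigma_sets[OF rv] by (rule sigma_sets.Basic)
      qed
      ultimately show ?thesis unfolding W_def a_def by measurable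
    qed
    have iv: "indep_var borel (epsi t) borel W"
      by (rule indep_past[OF indep Wc]) auto
    have Wi: "integrable M W"
    proof (rule Bochner_Integration.integrable_bound[where f="\<lambda>x. (Y (t-k) x)^2 + (a s x)^2"])
      show "integrable M (\<lambda>x. (Y (t-k) x)^2 + (a s x)^2)" using diag Y2 by auto
      show "W \<in> borel_measurable M" unfolding W_def using am Ym by measurable
      show "AE x in M. norm (W x) \<le> norm ((Y (t-k) x)^2 + (a s x)^2)"
        unfolding W_def by (intro AE_I2) (simp only: real_norm_def abs_mult_le_sq2)
    qed
    have "(\<lambda>x. a t x * a s x) = (\<lambda>x. epsi t x * W x)" by (auto simp: a_def W_def)
    then show ?thesis
      using indep_var_lebesgue_integral[OF iv e1 Wi] e0 by simp
  qed
  have sq: "(\<lambda>x. (\<Sum>t\<in>T. a t x)^2) = (\<lambda>x. \<Sum>t\<in>T. \<Sum>s\<in>T. a t x * a s x)"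
    by (auto simp: power2_eq_square sum_product)
  have int: "integrable M (\<lambda>x. (\<Sum>t\<in>T. a t x)^2)"
    unfolding sq using prodint by auto
  have "expectation (\<lambda>x. (\<Sum>t\<in>T. a t x)^2) = (\<Sum>t\<in>T. \<Sum>s\<in>T. expectation (\<lambda>x. a t x * a s x))"
    unfolding sq using prodint by (simp add: Bochner_Integration.integral_sum)
  also have "\<dots> = (\<Sum>t\<in>T. expectation (\<lambda>x. (a t x)^2))"
  proof (rule sum.cong[OF refl])
    fix t assume t: "t \<in> T"
    have "(\<Sum>s\<in>T. expectation (\<lambda>x. a t x * a s x)) = (\<Sum>s\<in>T. if s = t then expectation (\<lambda>x. (a t x)^2) else 0)"
    proof (rule sum.cong[OF refl])
      fix s assume "s \<in> T"
      show "expectation (\<lambda>x. a t x * a s x) = (if s = t then expectation (\<lambda>x. (a t x)^2) else 0)"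
      proof (cases "s = t")
        case True then show ?thesis by (simp add: power2_eq_square)
      next
        case False
        then have "s < t \<or> t < s" by auto
        then show ?thesis
        proof
          assume "s < t" then show ?thesis using off[of s t] False by simp
        next
          assume "t < s" then show ?thesis using off[of t s] False by (simp add: mult.commute)
        qed
      qed
    qed
    also have "\<dots> = expectation (\<lambda>x. (a t x)^2)" using T t by (simp add: sum.delta')
    finally show "(\<Sum>s\<in>T. expectation (\<lambda>x. a t x * a s x)) = expectation (\<lambda>x. (a t x)^2)" .
  qed
  also have "\<dots> \<le> (\<Sum>t\<in>T. S * K)" by (rule sum_mono) (use diag in auto)
  also have "\<dots> = real (card T) * S * K" by simp
  finally show ?thesis using int unfolding a_def by simp
qed




lemma amgm: assumes "(g::real) > 0" shows "\<bar>u * w\<bar> \<le> (g * u^2 + w^2 / g) / 2"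
proof -
  have "0 \<le> (g * \<bar>u\<bar> - \<bar>w\<bar>)^2 / g" using assms by simp
  also have "(g * \<bar>u\<bar> - \<bar>w\<bar>)^2 / g = g * u^2 + w^2 / g - 2 * \<bar>u * w\<bar>"
    using assms by (simp add: power2_eq_square field_simps abs_mult)
  finally show ?thesis by simp
qed

lemma ennreal_abs_suminf_le: "ennreal \<bar>suminf (h::nat \<Rightarrow> real)\<bar> \<le> (\<Sum>k. ennreal \<bar>h k\<bar>)"
proof (cases "summable (\<lambda>k. \<bar>h k\<bar>)")
  case True
  then have "\<bar>suminf h\<bar> \<le> (\<Sum>k. \<bar>h k\<bar>)" by (rule summable_rabs)
  moreover have "(\<Sum>k. ennreal \<bar>h k\<bar>) = ennreal (\<Sum>k. \<bar>h k\<bar>)"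
    by (rule suminf_ennreal2) (use True in auto)
  ultimately show ?thesis by (simp add: ennreal_leI)
next
  case False
  then have "(\<Sum>k. ennreal \<bar>h k\<bar>) = top" by (intro summable_iff_suminf_neq_top) auto
  then show ?thesis by simp
qed

lemma inv_bound:
  fixes d c1 l lamb th :: real and m :: nat
  assumes d: "d > 0" and c1: "c1 > 0" and m: "m \<ge> 1" and l: "l \<ge> c1 * real m powr lamb"
    and th: "0 < th" "th \<le> 1"
  shows "1 / (1 + d^2 * l^2) \<le> d powr (-2*th) * c1 powr (-2*th) * real m powr (-2*lamb*th)"
proof -
  define z where "z = d * c1 * real m powr lamb"
  have z: "z > 0" unfolding z_def using d c1 m by auto
  define y where "y = d * l"
  have zy: "z \<le> y" unfolding z_def y_def using l d by (simp add: mult.assoc)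
  have y: "y > 0" using z zy by linarith
  have "1 / (1 + d^2 * l^2) = 1 / (1 + y^2)" by (simp add: y_def power_mult_distrib)
  also have "\<dots> \<le> y powr (-2*th)"
  proof (cases "y \<ge> 1")
    case True
    have "1 / (1 + y^2) \<le> 1 / y^2" using y by (simp add: frac_le)
    also have "1 / y^2 = y powr (-2)" using y by (simp add: powr_minus powr_numeral divide_inverse)
    also have "\<dots> \<le> y powr (-2*th)" using True th by (intro powr_mono) auto
    finally show ?thesis .
  next
    case False
    have "1 / (1 + y^2) \<le> 1" using y by (simp add: field_simps add_pos_nonneg)
    also have "1 \<le> y powr (-2*th)" using False y th
    proof -
      have a: "y powr (2*th) \<le> 1" using False y th by (intro powr_le1) auto
      have b: "0 < y powr (2*th)" using y by simp
      have "y powr (-2*th) = inverse (y powr (2*th))" by (simp add: powr_minus[symmetric])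
      then show ?thesis using a b by (simp add: one_le_inverse)
    qed
    finally show ?thesis .
  qed
  also have "\<dots> \<le> z powr (-2*th)" using z zy th by (intro powr_mono2') auto
  also have "z powr (-2*th) = d powr (-2*th) * c1 powr (-2*th) * real m powr (-2*lamb*th)"
    unfolding z_def using d c1 m by (simp add: powr_mult powr_powr mult_ac)
  finally show ?thesis .
qed




lemma pointwise:
  fixes e Y :: "int \<Rightarrow> real" and b lam :: "nat \<Rightarrow> real" and n :: nat and d th B c1 lamb :: real
  assumes n: "n \<ge> 1" and d: "d > 0" and c1: "c1 > 0" and lamb: "lamb \<ge> 0"
    and lam_lb: "\<forall>k\<ge>1. c1 * real k powr lamb \<le> lam k"
    and bE: "inE lam b" and bB: "Enorm lam b \<le> 2 * B" and bd: "l2norm b \<le> d"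
    and good: "\<forall>t\<in>{1..int n}. summable (\<lambda>k. (Y (t - int (Suc k)))^2 / (1 + d^2 * (lam (Suc k))^2))"
  shows "ennreal \<bar>(1 / sqrt (real n)) * (\<Sum>t=1..int n. e t * (\<Sum>k. b (Suc k) * Y (t - int (Suc k))))\<bar>
    \<le> ennreal ((1 + 4 * B^2) / 2 * d powr (1 - th))
       + ennreal (d powr (1 + th) / (2 * real n)) *
         (\<Sum>k. ennreal ((\<Sum>t=1..int n. e t * Y (t - int (Suc k)))^2 / (1 + d^2 * (lam (Suc k))^2)))"
proof -
  define T where "T = {1..int n}"
  define v where "v k = 1 + d^2 * (lam (Suc k))^2" for k
  have vpos: "v k > 0" for k unfolding v_def by (simp add: add_pos_nonneg)
  have lam_ge: "lam (Suc k) \<ge> c1" for k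
  proof -
    have "1 \<le> real (Suc k) powr lamb" using lamb by (simp add: ge_one_powr_ge_zero)
    then have "c1 \<le> c1 * real (Suc k) powr lamb" using c1 by simp
    also have "\<dots> \<le> lam (Suc k)" using lam_lb by auto
    finally show ?thesis .
  qed
  define q where "q k = (lam (Suc k) * b (Suc k))^2" for k
  have sq: "summable q" using bE unfolding inE_def q_def by simp
  have q0: "0 \<le> suminf q" using sq by (simp add: suminf_nonneg q_def)
  have sqB: "suminf q \<le> 4 * B^2"
  proof -
    have "sqrt (suminf q) \<le> 2 * B" using bB unfolding Enorm_def q_def by simp
    then have "(sqrt (suminf q))^2 \<le> (2 * B)^2" using q0 by (intro power_mono) auto
    then show ?thesis using q0 by (simp add: power_mult_distrib)
  qed
  have bq: "(b (Suc k))^2 \<le> q k / c1^2" for k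
  proof -
    have "c1^2 * (b (Suc k))^2 \<le> (lam (Suc k))^2 * (b (Suc k))^2"
      using lam_ge[of k] c1 by (intro mult_right_mono power_mono) auto
    then show ?thesis using c1 by (simp add: q_def field_simps power_mult_distrib)
  qed
  have sb: "summable (\<lambda>k. (b (Suc k))^2)"
    by (rule summable_comparison_test[where g="\<lambda>k. q k / c1^2"]) (use bq sq in \<open>auto intro: summable_divide\<close>)
  have sbd: "(\<Sum>k. (b (Suc k))^2) \<le> d^2"
  proof -
    have s0: "0 \<le> (\<Sum>k. (b (Suc k))^2)" using sb by (simp add: suminf_nonneg)
    have "sqrt (\<Sum>k. (b (Suc k))^2) \<le> d" using bd unfolding l2norm_def .
    then have "(sqrt (\<Sum>k. (b (Suc k))^2))^2 \<le> d^2" using s0 by (intro power_mono) auto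
    then show ?thesis using s0 by simp
  qed
  define A where "A k = d powr (-1 - th) * v k * (b (Suc k))^2 / 2" for k
  have vb: "v k * (b (Suc k))^2 = (b (Suc k))^2 + d^2 * q k" for k
    unfolding v_def q_def by (simp add: algebra_simps power_mult_distrib)
  have svb: "summable (\<lambda>k. v k * (b (Suc k))^2)"
    unfolding vb using sb sq by (intro summable_add summable_mult) auto
  have sA: "summable A" unfolding A_def using svb
    by (simp add: mult.assoc summable_mult summable_divide)
  have A0: "A k \<ge> 0" for k unfolding A_def using vpos[of k] by simp
  have sumA: "suminf A \<le> (1 + 4 * B^2) / 2 * d powr (1 - th)"
  proof -
    have "suminf A = d powr (-1 - th) / 2 * (\<Sum>k. v k * (b (Suc k))^2)"
      unfolding A_def using svb by (subst suminf_mult[symmetric]) (auto simp: algebra_simps)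
    also have "(\<Sum>k. v k * (b (Suc k))^2) = (\<Sum>k. (b (Suc k))^2) + d^2 * suminf q"
      unfolding vb using sb sq by (simp add: suminf_add[symmetric] suminf_mult)
    also have "\<dots> \<le> d^2 + d^2 * (4 * B^2)"
      using sbd sqB d by (intro add_mono mult_left_mono) auto
    also have "d powr (-1 - th) / 2 * (d^2 + d^2 * (4 * B^2)) = (1 + 4 * B^2) / 2 * (d powr (-1 - th) * d powr 2)"
      using d by (simp add: powr_realpow algebra_simps)
    also have "d powr (-1 - th) * d powr 2 = d powr (1 - th)"
      by (simp add: powr_add[symmetric])
    finally show ?thesis using d by (simp add: mult_left_mono)
  qed
  define h where "h t k = b (Suc k) * Y (t - int (Suc k))" for t k
  have sh: "summable (h t)" if "t \<in> T" for t
  proof (rule summable_rabs_cancel, rule summable_comparison_test[where g="\<lambda>k. (v k * (b (Suc k))^2 + (Y (t - int (Suc k)))^2 / v k) / 2"])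
    show "\<exists>N. \<forall>k\<ge>N. norm \<bar>h t k\<bar> \<le> (v k * (b (Suc k))^2 + (Y (t - int (Suc k)))^2 / v k) / 2"
      unfolding h_def using amgm[OF vpos] by auto
    have "summable (\<lambda>k. (Y (t - int (Suc k)))^2 / v k)" using good that unfolding T_def v_def by auto
    then show "summable (\<lambda>k. (v k * (b (Suc k))^2 + (Y (t - int (Suc k)))^2 / v k) / 2)"
      using svb by (intro summable_divide summable_add) auto
  qed
  define Z where "Z k = (\<Sum>t\<in>T. e t * Y (t - int (Suc k)))" for k
  have eq: "(1 / sqrt (real n)) * (\<Sum>t\<in>T. e t * suminf (h t)) = (\<Sum>k. b (Suc k) * Z k / sqrt (real n))"
  proof -
    have "(\<Sum>t\<in>T. e t * suminf (h t)) = (\<Sum>t\<in>T. \<Sum>k. e t * h t k)"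
      using sh by (intro sum.cong refl suminf_mult[symmetric]) auto
    also have "\<dots> = (\<Sum>k. \<Sum>t\<in>T. e t * h t k)"
      using sh by (intro suminf_sum[symmetric] summable_mult) auto
    also have "\<dots> = (\<Sum>k. b (Suc k) * Z k)"
      unfolding Z_def h_def by (simp add: sum_distrib_left algebra_simps)
    finally have "(\<Sum>t\<in>T. e t * suminf (h t)) = (\<Sum>k. b (Suc k) * Z k)" .
    moreover have "summable (\<lambda>k. b (Suc k) * Z k)"
    proof -
      have "summable (\<lambda>k. \<Sum>t\<in>T. e t * h t k)" using sh by (intro summable_sum summable_mult) auto
      moreover have "(\<lambda>k. \<Sum>t\<in>T. e t * h t k) = (\<lambda>k. b (Suc k) * Z k)"
        unfolding Z_def h_def by (simp add: sum_distrib_left algebra_simps)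
      ultimately show ?thesis by simp
    qed
    ultimately show ?thesis
      by (simp add: suminf_divide[symmetric])
  qed
  define c where "c = d powr (1 + th) / (2 * real n)"
  have trm: "ennreal \<bar>b (Suc k) * Z k / sqrt (real n)\<bar> \<le> ennreal (A k) + ennreal c * ennreal ((Z k)^2 / v k)" for k
  proof -
    define g where "g = d powr (-1 - th) * v k"
    have g: "g > 0" unfolding g_def using d vpos[of k] by simp
    have "\<bar>b (Suc k) * (Z k / sqrt (real n))\<bar> \<le> (g * (b (Suc k))^2 + (Z k / sqrt (real n))^2 / g) / 2"
      by (rule amgm[OF g])
    also have "\<dots> = A k + c * ((Z k)^2 / v k)"
    proof -
      have "(Z k / sqrt (real n))^2 = (Z k)^2 / real n" using n by (simp add: power_divide)
      moreover have "1 / g = d powr (1 + th) / v k" unfolding g_def using d vpos[of k]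
        by (simp add: powr_minus_divide field_simps powr_add powr_diff)
      ultimately show ?thesis
        unfolding A_def c_def g_def using vpos[of k] n d
        by (simp add: field_simps)
    qed
    finally have "\<bar>b (Suc k) * Z k / sqrt (real n)\<bar> \<le> A k + c * ((Z k)^2 / v k)" by simp
    moreover have "c \<ge> 0" unfolding c_def by simp
    ultimately show ?thesis
      using A0[of k] vpos[of k] by (simp add: ennreal_mult[symmetric] ennreal_plus[symmetric] del: ennreal_plus)
  qed
  have "ennreal \<bar>(1 / sqrt (real n)) * (\<Sum>t\<in>T. e t * suminf (h t))\<bar> \<le> (\<Sum>k. ennreal \<bar>b (Suc k) * Z k / sqrt (real n)\<bar>)"
    unfolding eq by (rule ennreal_abs_suminf_le)
  also have "\<dots> \<le> (\<Sum>k. ennreal (A k) + ennreal c * ennreal ((Z k)^2 / v k))"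
    by (intro suminf_le summableI trm)
  also have "\<dots> = (\<Sum>k. ennreal (A k)) + ennreal c * (\<Sum>k. ennreal ((Z k)^2 / v k))"
    by (simp add: suminf_add[symmetric] summableI)
  finally have L: "ennreal \<bar>(1 / sqrt (real n)) * (\<Sum>t\<in>T. e t * suminf (h t))\<bar>
       \<le> (\<Sum>k. ennreal (A k)) + ennreal c * (\<Sum>k. ennreal ((Z k)^2 / v k))" .
  have "(\<Sum>k. ennreal (A k)) = ennreal (suminf A)"
    by (rule suminf_ennreal2[OF A0 sA])
  also have "\<dots> \<le> ennreal ((1 + 4 * B^2) / 2 * d powr (1 - th))"
    using sumA by (rule ennreal_leI)
  finally have R: "(\<Sum>k. ennreal (A k)) + ennreal c * (\<Sum>k. ennreal ((Z k)^2 / v k))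
      \<le> ennreal ((1 + 4 * B^2) / 2 * d powr (1 - th)) + ennreal c * (\<Sum>k. ennreal ((Z k)^2 / v k))"
    by (rule add_right_mono)
  have "ennreal \<bar>(1 / sqrt (real n)) * (\<Sum>t\<in>T. e t * suminf (h t))\<bar>
     \<le> ennreal ((1 + 4 * B^2) / 2 * d powr (1 - th)) + ennreal c * (\<Sum>k. ennreal ((Z k)^2 / v k))"
    using L R by (rule order_trans)
  then show ?thesis unfolding T_def h_def c_def Z_def v_def .
qed




lemma (in prob_space) nn_int_div_le:
  assumes "integrable M W" "\<And>x. W x \<ge> 0" "expectation W \<le> r" "(v::real) > 0"
  shows "(\<integral>\<^sup>+x. ennreal (W x / v) \<partial>M) \<le> ennreal (r / v)"
proof -
  have "(\<integral>\<^sup>+x. ennreal (W x / v) \<partial>M) = ennreal (\<integral>x. W x / v \<partial>M)"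
    using assms by (intro nn_integral_eq_integral) auto
  also have "(\<integral>x. W x / v \<partial>M) = expectation W / v" by simp
  also have "ennreal (expectation W / v) \<le> ennreal (r / v)"
    using assms by (intro ennreal_leI divide_right_mono) auto
  finally show ?thesis .
qed

theorem lemma6:
  fixes M :: "'a measure"
    and epsi :: "int \<Rightarrow> 'a \<Rightarrow> real"
    and Y :: "int \<Rightarrow> 'a \<Rightarrow> real"
    and lam phi :: "nat \<Rightarrow> real"
    and lamb c1 c2 B eps :: real
  assumes "prob_space M"
    and indep: "prob_space.indep_vars M (\<lambda>_. borel) epsi UNIV"
    and ident: "\<forall>t. distr M borel (epsi t) = distr M borel (epsi 0)"
    and mean0: "\<forall>t. integrable M (epsi t) \<and> prob_space.expectation M (epsi t) = 0"
    and var: "\<forall>t. integrable M (\<lambda>x. (epsi t x)^2) \<and> prob_space.expectation M (\<lambda>x. (epsi t x)^2) > 0"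
    and fourth: "\<forall>t. integrable M (\<lambda>x. (epsi t x)^4)"
    and lam_gt: "lamb > 1/2"
    and c12: "0 < c1" "c1 \<le> c2"
    and lam_bounds: "\<forall>k\<ge>1. c1 * real k powr lamb \<le> lam k \<and> lam k \<le> c2 * real k powr lamb"
    and phiE: "inE lam phi"
    and phi_root: "\<forall>z::complex. norm z \<le> 1 \<longrightarrow>
                     1 - (\<Sum>k. complex_of_real (phi (Suc k)) * z ^ Suc k) \<noteq> 0"
    and Y_rv: "\<forall>t. Y t \<in> borel_measurable M"
    and Y_causal: "\<forall>t. Y t \<in> borel_measurable (past_sigma M epsi t)"
    and Y_L2: "\<exists>K. \<forall>t. integrable M (\<lambda>x. (Y t x)^2) \<and> prob_space.expectation M (\<lambda>x. (Y t x)^2) \<le> K"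
    and AR: "\<forall>t. AE x in M. (\<lambda>k. phi (Suc k) * Y (t - int (Suc k)) x) sums (Y t x - epsi t x)"
    and B_pos: "B > 0"
    and eps_rng: "0 < eps" "eps < 2 * lamb - 1"
  shows "\<exists>C::real. \<forall>n::nat. \<forall>\<delta>::real. n \<ge> 1 \<longrightarrow> 0 < \<delta> \<longrightarrow> \<delta> \<le> 1 \<longrightarrow>
           outer_nn_integral M
             (\<lambda>x. \<Squnion>b \<in> {b. inE lam b \<and> Enorm lam b \<le> 2 * B \<and> l2norm b \<le> \<delta>}.
                 ennreal \<bar>(1 / sqrt (real n)) * (\<Sum>t=1..int n. epsi t x * Xt Y b t x)\<bar>)
           \<le> ennreal (C * \<delta> powr ((2 * lamb - eps - 1) / (2 * lamb - eps)))"
proof -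
  interpret prob_space M by fact
  obtain K where YK: "\<And>t. integrable M (\<lambda>x. (Y t x)^2)" "\<And>t. expectation (\<lambda>x. (Y t x)^2) \<le> K"
    using Y_L2 by auto
  have K0: "K \<ge> 0"
  proof -
    have "0 \<le> expectation (\<lambda>x. (Y 0 x)^2)" by (rule integral_nonneg_AE) auto
    then show ?thesis using YK(2)[of 0] by linarith
  qed
  have rv: "\<And>s. epsi s \<in> borel_measurable M" using indep unfolding indep_vars_def2 by auto
  have Ym: "\<And>t. Y t \<in> borel_measurable M" using Y_rv by auto
  define S where "S = expectation (\<lambda>x. (epsi 0 x)^2)"
  have e2S: "expectation (\<lambda>x. (epsi t x)^2) = S" for t
  proof -
    have "expectation (\<lambda>x. (epsi t x)^2) = integral\<^sup>L (distr M borel (epsi t)) (\<lambda>y. y^2)"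
      using rv by (subst integral_distr) auto
    also have "\<dots> = integral\<^sup>L (distr M borel (epsi 0)) (\<lambda>y. y^2)" using ident by (metis (no_types))
    also have "\<dots> = S" unfolding S_def using rv by (subst integral_distr) auto
    finally show ?thesis .
  qed
  have S0: "S \<ge> 0" using var e2S by (metis less_imp_le)
  define th where "th = 1 / (2 * lamb - eps)"
  have th: "0 < th" "th < 1" unfolding th_def using eps_rng by auto
  have expo: "(2 * lamb - eps - 1) / (2 * lamb - eps) = 1 - th"
    unfolding th_def using eps_rng by (simp add: field_simps)
  define p where "p = 2 * lamb * th"
  have p1: "p > 1" unfolding p_def th_def using eps_rng by (simp add: field_simps)
  have sZ: "summable (\<lambda>k. real (Suc k) powr (-p))"
  proof -
    have "summable (\<lambda>k. real k powr (-p))" using p1 by (simp add: summable_real_powr_iff)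
    then show ?thesis by (subst summable_Suc_iff)
  qed
  define Zs where "Zs = (\<Sum>k. real (Suc k) powr (-p))"
  define C where "C = (1 + 4 * B^2) / 2 + S * K * c1 powr (-2*th) * Zs / 2"
  show ?thesis
  proof (intro exI[of _ C] allI impI)
    fix n :: nat and d :: real
    assume n: "n \<ge> 1" and d: "0 < d" "d \<le> 1"
    define T where "T = {1..int n}"
    define v where "v k = 1 + d^2 * (lam (Suc k))^2" for k
    have vpos: "v k > 0" for k unfolding v_def by (simp add: add_pos_nonneg)
    define w where "w k = d powr (-2*th) * c1 powr (-2*th) * real (Suc k) powr (-p)" for k
    have vw: "1 / v k \<le> w k" for k
    proof -
      have "1 / (1 + d^2 * (lam (Suc k))^2) \<le> d powr (-2*th) * c1 powr (-2*th) * real (Suc k) powr (-2*lamb*th)"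
        by (rule inv_bound) (use lam_bounds d c12 th in auto)
      then show ?thesis unfolding v_def w_def p_def by simp
    qed
    have sw: "summable w" unfolding w_def using sZ by (intro summable_mult) 
    have w0: "w k \<ge> 0" for k unfolding w_def by simp
    have sumw: "suminf w = d powr (-2*th) * c1 powr (-2*th) * Zs"
      unfolding w_def Zs_def using sZ by (simp add: suminf_mult)
    define Z where "Z k x = (\<Sum>t\<in>T. epsi t x * Y (t - int (Suc k)) x)" for k x
    define D1 where "D1 = (1 + 4 * B^2) / 2 * d powr (1 - th)"
    define c where "c = d powr (1 + th) / (2 * real n)"
    define good where "good x \<longleftrightarrow> (\<forall>t\<in>T. (\<Sum>k. ennreal ((Y (t - int (Suc k)) x)^2 / v k)) < top)" for x
    define G where "G x = (\<Sum>k. ennreal ((Z k x)^2 / v k))" for x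
    define g where "g x = (if good x then ennreal D1 + ennreal c * G x else top)" for x
    let ?f = "\<lambda>x. \<Squnion>b \<in> {b. inE lam b \<and> Enorm lam b \<le> 2 * B \<and> l2norm b \<le> d}.
                 ennreal \<bar>(1 / sqrt (real n)) * (\<Sum>t=1..int n. epsi t x * Xt Y b t x)\<bar>"
    have gm: "g \<in> borel_measurable M"
      unfolding g_def good_def G_def Z_def v_def using rv Ym by measurable
    have fg: "?f x \<le> g x" for x
    proof (cases "good x")
      case False then show ?thesis by (simp add: g_def)
    next
      case True
      show ?thesis
      proof (rule SUP_least)
        fix b assume b: "b \<in> {b. inE lam b \<and> Enorm lam b \<le> 2 * B \<and> l2norm b \<le> d}"
        have gd: "\<forall>t\<in>{1..int n}. summable (\<lambda>k. (Y (t - int (Suc k)) x)^2 / (1 + d^2 * (lam (Suc k))^2))"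
          using True unfolding good_def T_def v_def
          by (auto intro!: summable_suminf_not_top)
        have "ennreal \<bar>(1 / sqrt (real n)) * (\<Sum>t=1..int n. epsi t x * Xt Y b t x)\<bar> \<le>
            ennreal ((1 + 4 * B^2) / 2 * d powr (1 - th))
       + ennreal (d powr (1 + th) / (2 * real n)) *
         (\<Sum>k. ennreal ((\<Sum>t=1..int n. epsi t x * Y (t - int (Suc k)) x)^2 / (1 + d^2 * (lam (Suc k))^2)))"
          unfolding Xt_def
          by (rule pointwise[where e="\<lambda>t. epsi t x" and Y="\<lambda>t. Y t x" and lamb=lamb and th=th and B=B and lam=lam and b=b, OF n d(1) c12(1) _ _ _ _ _ gd])
             (use lam_gt lam_bounds b in auto)
        then show "ennreal \<bar>(1 / sqrt (real n)) * (\<Sum>t=1..int n. epsi t x * Xt Y b t x)\<bar> \<le> g x"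
          using True unfolding g_def D1_def c_def G_def Z_def T_def v_def by simp
      qed
    qed
    have AEgood: "AE x in M. good x"
    proof -
      have "AE x in M. (\<Sum>k. ennreal ((Y (t - int (Suc k)) x)^2 / v k)) \<noteq> \<infinity>" if "t \<in> T" for t
      proof (rule nn_integral_PInf_AE)
        show "(\<lambda>x. \<Sum>k. ennreal ((Y (t - int (Suc k)) x)^2 / v k)) \<in> borel_measurable M"
          unfolding v_def using Ym by measurable
        have "(\<integral>\<^sup>+x. (\<Sum>k. ennreal ((Y (t - int (Suc k)) x)^2 / v k)) \<partial>M)
            = (\<Sum>k. \<integral>\<^sup>+x. ennreal ((Y (t - int (Suc k)) x)^2 / v k) \<partial>M)"
          by (intro nn_integral_suminf) (use Ym in measurable)
        also have "\<dots> \<le> (\<Sum>k. ennreal (K * w k))"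
        proof (intro suminf_le summableI)
          fix k
          have "(\<integral>\<^sup>+x. ennreal ((Y (t - int (Suc k)) x)^2 / v k) \<partial>M) \<le> ennreal (K / v k)"
            by (rule nn_int_div_le[OF YK(1) _ YK(2) vpos]) auto
          also have "K / v k \<le> K * w k" using vw[of k] K0 by (simp add: divide_inverse mult_left_mono flip: inverse_eq_divide)
          finally show "(\<integral>\<^sup>+x. ennreal ((Y (t - int (Suc k)) x)^2 / v k) \<partial>M) \<le> ennreal (K * w k)"
            by (simp add: ennreal_leI order_trans)
        qed
        also have "\<dots> < top"
        proof -
          have w0: "w k \<ge> 0" for k unfolding w_def by simp
          have "(\<Sum>k. ennreal (K * w k)) = ennreal (\<Sum>k. K * w k)"
            using K0 w0 sw by (intro suminf_ennreal2 summable_mult) auto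
          then show ?thesis by simp
        qed
        finally show "(\<integral>\<^sup>+x. (\<Sum>k. ennreal ((Y (t - int (Suc k)) x)^2 / v k)) \<partial>M) \<noteq> \<infinity>" by simp
      qed
      then have "AE x in M. \<forall>t\<in>T. (\<Sum>k. ennreal ((Y (t - int (Suc k)) x)^2 / v k)) \<noteq> \<infinity>"
        unfolding T_def by (subst AE_finite_all) auto
      then show ?thesis unfolding good_def by (simp add: less_top)
    qed
    have "outer_nn_integral M ?f \<le> integral\<^sup>N M g"
      unfolding outer_nn_integral_def
      by (rule INF_lower) (use gm fg in auto)
    also have "integral\<^sup>N M g = (\<integral>\<^sup>+x. ennreal D1 + ennreal c * G x \<partial>M)"
      by (rule nn_integral_cong_AE) (use AEgood in \<open>auto simp: g_def\<close>)
    also have "\<dots> = ennreal D1 + ennreal c * integral\<^sup>N M G"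
      unfolding G_def Z_def using rv Ym
      by (simp add: nn_integral_add nn_integral_cmult emeasure_space_1)
    also have "integral\<^sup>N M G \<le> ennreal (real n * S * K * (d powr (-2*th) * c1 powr (-2*th) * Zs))"
    proof -
      have "integral\<^sup>N M G = (\<Sum>k. \<integral>\<^sup>+x. ennreal ((Z k x)^2 / v k) \<partial>M)"
        unfolding G_def Z_def v_def by (intro nn_integral_suminf) (use rv Ym in measurable)
      also have "\<dots> \<le> (\<Sum>k. ennreal (real n * S * K * w k))"
      proof (intro suminf_le summableI)
        fix k
        have mo: "integrable M (\<lambda>x. (Z k x)^2) \<and> expectation (\<lambda>x. (Z k x)^2) \<le> real (card T) * S * K"
          unfolding Z_def
          by (rule moment[OF indep, where k="int (Suc k)"]) (use var e2S mean0 Y_causal YK T_def in auto)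
        have "(\<integral>\<^sup>+x. ennreal ((Z k x)^2 / v k) \<partial>M) \<le> ennreal (real n * S * K / v k)"
          by (rule nn_int_div_le[OF conjunct1[OF mo] _ _ vpos]) (use mo T_def in auto)
        also have "real n * S * K / v k \<le> real n * S * K * w k"
          using vw[of k] K0 S0 by (simp add: divide_inverse mult_left_mono flip: inverse_eq_divide)
        finally show "(\<integral>\<^sup>+x. ennreal ((Z k x)^2 / v k) \<partial>M) \<le> ennreal (real n * S * K * w k)"
          by (simp add: ennreal_leI order_trans)
      qed
      also have "\<dots> = ennreal (\<Sum>k. real n * S * K * w k)"
        using K0 S0 sw w0 by (intro suminf_ennreal2 summable_mult) auto
      also have "(\<Sum>k. real n * S * K * w k) = real n * S * K * (d powr (-2*th) * c1 powr (-2*th) * Zs)"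
        using sw sumw by (simp add: suminf_mult)
      finally show ?thesis .
    qed
    then have "ennreal D1 + ennreal c * integral\<^sup>N M G \<le> ennreal D1 + ennreal c * ennreal (real n * S * K * (d powr (-2*th) * c1 powr (-2*th) * Zs))"
      by (intro add_left_mono mult_left_mono) auto
    also have "\<dots> = ennreal (C * d powr ((2 * lamb - eps - 1) / (2 * lamb - eps)))"
    proof -
      have c0: "c \<ge> 0" unfolding c_def by simp
      have Zs0: "Zs \<ge> 0" unfolding Zs_def using sZ by (simp add: suminf_nonneg)
      have D10: "D1 \<ge> 0" unfolding D1_def by simp
      have prod0: "0 \<le> real n * S * K * (d powr (-2*th) * c1 powr (-2*th) * Zs)" using S0 K0 Zs0 by simp
      have key: "c * (real n * S * K * (d powr (-2*th) * c1 powr (-2*th) * Zs)) = S * K * c1 powr (-2*th) * Zs / 2 * d powr (1 - th)"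
      proof -
        have "d powr (1 + th) * d powr (-2*th) = d powr (1 - th)" by (simp add: powr_add[symmetric])
        then show ?thesis unfolding c_def using n
          by (simp add: field_simps)
      qed
      have "ennreal D1 + ennreal c * ennreal (real n * S * K * (d powr (-2*th) * c1 powr (-2*th) * Zs))
          = ennreal (D1 + c * (real n * S * K * (d powr (-2*th) * c1 powr (-2*th) * Zs)))"
        using c0 D10 prod0 by (simp add: ennreal_mult[symmetric] ennreal_plus[symmetric] del: ennreal_plus)
      also have "D1 + c * (real n * S * K * (d powr (-2*th) * c1 powr (-2*th) * Zs)) = C * d powr (1 - th)"
        unfolding key D1_def C_def by (simp add: algebra_simps)
      finally show ?thesis unfolding expo .
    qed
    finally show "outer_nn_integral M ?f \<le> ennreal (C * d powr ((2 * lamb - eps - 1) / (2 * lamb - eps)))" .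
  qed
qed


end
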